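(* In the congestion game, let $R=\sup_{\lambda\ll\lambda_0}\mathrm{PoA}(\lambda)$, and assume that for each $w\in\mathcal{W}$ and every $x\in\mathcal{C}(w)$ there exists $e\in x$ with $c_e(t)>0$ for all $t>0$. Let $W_1,W_2,\dots$ be i.i.d. with law $\lambda_0\in\mathcal{P}(\mathcal{W})$. Then for every $\epsilon>0$ and $c>0$ there exists $N$ such that for all $n\ge N$, $$\mathbb{P}(\mathrm{PoA}_n(W_1,\dots,W_n)\ge R+\epsilon)\le e^{-cn}.$$
   Context: Congestion game: $\mathcal{W}$ finite set of types; $E$ finite set; $\mathcal{X}=2^E\setminus\{\emptyset\}$ (both finite, discrete); $\mathcal{C}$ assigns to each $w$ a nonempty set $\mathcal{C}(w)\subset\mathcal{X}$; each $c_e:[0,\infty)\to[0,\infty)$ is continuous and increasing; $\ell_e(m)=m\{(w,x):e\in x\}$ and $F(m,w,x)=\sum_{e\in x}c_e(\ell_e(m))$ for $m\in\mathcal{P}(\mathcal{W}\times\mathcal{X})$. A Nash equilibrium with type vector $\vec w=(w_1,\dots,w_n)$ is $(x_1,\dots,x_n)$ with $x_i\in\mathcal{C}(w_i)$ and $F(\frac1n\sum_k\delta_{(w_k,x_k)},w_i,x_i)=\min_{y\in\mathcal{C}(w_i)}F(\frac1n\sum_{k\ne i}\delta_{(w_k,x_k)}+\frac1n\delta_{(w_i,y)},w_i,y)$ for all $i$; these exist for all $n$ and $\vec w$. $\widehat{\mathcal{N}}_n(\vec w)$ = set of $\frac1n\sum_i\delta_{(w_i,x_i)}$ over such equilibria;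 $\widehat{\mathcal{A}}_n(\vec w)=\{\frac1n\sum_k\delta_{(w_k,x_k)}:x_i\in\mathcal{C}(w_i)\}$; $V(m)=\int F(m,w,x)\,m(dw,dx)$; $\mathrm{PoA}_n(\vec w)=\sup_{\widehat{\mathcal{N}}_n(\vec w)}V/\inf_{\widehat{\mathcal{A}}_n(\vec w)}V$. For $\lambda\in\mathcal{P}(\mathcal{W})$: $\mathcal{A}(\lambda)=\{m:\text{first marginal }\lambda,\ m\{(w,x):x\in\mathcal{C}(w)\}=1\}$, $\mathcal{M}(\lambda)$ = set of $m\in\mathcal{A}(\lambda)$ with $F(m,w,x)=\min_{y\in\mathcal{C}(w)}F(m,w,y)$ for $m$-a.e. $(w,x)$, and $\mathrm{PoA}(\lambda)=\sup_{\mathcal{M}(\lambda)}V/\inf_{\mathcal{A}(\lambda)}V$. *)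

theory Defs
  imports "HOL-Probability.Probability"
begin

text \<open>Probability measures on the finite sets W and W x X are represented as pmfs.
  A population state is a pmf on pairs (type, strategy), a strategy being a set of resources.\<close>

definition load :: "('w \<times> 'e set) pmf \<Rightarrow> 'e \<Rightarrow> real" where
  "load m e = measure_pmf.prob m {p. e \<in> snd p}"

definition cost :: "('e \<Rightarrow> real \<Rightarrow> real) \<Rightarrow> ('w \<times> 'e set) pmf \<Rightarrow> 'w \<Rightarrow> 'e set \<Rightarrow> real" where
  "cost c m w x = (\<Sum>e\<in>x. c e (load m e))"

definition social_cost :: "('e \<Rightarrow> real \<Rightarrow> real) \<Rightarrow> ('w \<times> 'e set) pmf \<Rightarrow> real" where
  "social_cost c m = measure_pmf.expectation m (\<lambda>p. cost c m (fst p) (snd p))"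

definition admissible :: "('w \<Rightarrow> 'e set set) \<Rightarrow> 'w pmf \<Rightarrow> ('w \<times> 'e set) pmf set" where
  "admissible C lam = {m. map_pmf fst m = lam \<and> measure_pmf.prob m {p. snd p \<in> C (fst p)} = 1}"

definition mf_equilibria :: "('w \<Rightarrow> 'e set set) \<Rightarrow> ('e \<Rightarrow> real \<Rightarrow> real) \<Rightarrow> 'w pmf
    \<Rightarrow> ('w \<times> 'e set) pmf set" where
  "mf_equilibria C c lam = {m \<in> admissible C lam.
     AE p in measure_pmf m. cost c m (fst p) (snd p) = (MIN y\<in>C (fst p). cost c m (fst p) y)}"

definition PoA :: "('w \<Rightarrow> 'e set set) \<Rightarrow> ('e \<Rightarrow> real \<Rightarrow> real) \<Rightarrow> 'w pmf \<Rightarrow> real" where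
  "PoA C c lam = Sup (social_cost c ` mf_equilibria C c lam) / Inf (social_cost c ` admissible C lam)"

definition emp :: "nat \<Rightarrow> (nat \<Rightarrow> 'w) \<Rightarrow> (nat \<Rightarrow> 'e set) \<Rightarrow> ('w \<times> 'e set) pmf" where
  "emp n ws xs = map_pmf (\<lambda>i. (ws i, xs i)) (pmf_of_set {..<n})"

definition is_nash :: "('w \<Rightarrow> 'e set set) \<Rightarrow> ('e \<Rightarrow> real \<Rightarrow> real) \<Rightarrow> nat \<Rightarrow> (nat \<Rightarrow> 'w)
    \<Rightarrow> (nat \<Rightarrow> 'e set) \<Rightarrow> bool" where
  "is_nash C c n ws xs \<longleftrightarrow> (\<forall>i<n. xs i \<in> C (ws i)) \<and>
     (\<forall>i<n. cost c (emp n ws xs) (ws i) (xs i)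
            = (MIN y\<in>C (ws i). cost c (emp n ws (xs(i := y))) (ws i) y))"

definition nash_emp :: "('w \<Rightarrow> 'e set set) \<Rightarrow> ('e \<Rightarrow> real \<Rightarrow> real) \<Rightarrow> nat \<Rightarrow> (nat \<Rightarrow> 'w)
    \<Rightarrow> ('w \<times> 'e set) pmf set" where
  "nash_emp C c n ws = {emp n ws xs | xs. is_nash C c n ws xs}"

definition adm_emp :: "('w \<Rightarrow> 'e set set) \<Rightarrow> nat \<Rightarrow> (nat \<Rightarrow> 'w) \<Rightarrow> ('w \<times> 'e set) pmf set" where
  "adm_emp C n ws = {emp n ws xs | xs. \<forall>i<n. xs i \<in> C (ws i)}"

definition PoA_n :: "('w \<Rightarrow> 'e set set) \<Rightarrow> ('e \<Rightarrow> real \<Rightarrow> real) \<Rightarrow> nat \<Rightarrow> (nat \<Rightarrow> 'w) \<Rightarrow> real" where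
  "PoA_n C c n ws = Sup (social_cost c ` nash_emp C c n ws) / Inf (social_cost c ` adm_emp C n ws)"

end

theory Submission
  imports Defs
begin

definition ld :: "('w::finite \<times> 'e::finite set \<Rightarrow> real) \<Rightarrow> 'e \<Rightarrow> real" where
  "ld q e = (\<Sum>p\<in>{p. e \<in> snd p}. q p)"
definition Fc :: "('e \<Rightarrow> real \<Rightarrow> real) \<Rightarrow> ('w::finite \<times> 'e::finite set \<Rightarrow> real) \<Rightarrow> 'w \<Rightarrow> 'e set \<Rightarrow> real" where
  "Fc c q w x = (\<Sum>e\<in>x. c e (ld q e))"
definition Vc :: "('e \<Rightarrow> real \<Rightarrow> real) \<Rightarrow> ('w::finite \<times> 'e::finite set \<Rightarrow> real) \<Rightarrow> real" where
  "Vc c q = (\<Sum>p\<in>UNIV. q p * Fc c q (fst p) (snd p))"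
definition mg :: "('w::finite \<times> 'e::finite set \<Rightarrow> real) \<Rightarrow> 'w \<Rightarrow> real" where
  "mg q w = (\<Sum>p\<in>{p. fst p = w}. q p)"

lemma load_pmf: "load m e = ld (pmf m) e"
  unfolding load_def ld_def by (simp add: measure_measure_pmf_finite)

lemma cost_pmf: "cost c m w x = Fc c (pmf m) w x"
  unfolding cost_def Fc_def by (simp add: load_pmf)

lemma sc_pmf: "social_cost c m = Vc c (pmf m)"
  unfolding social_cost_def Vc_def
  by (subst integral_measure_pmf_real[where A=UNIV]) (auto simp: cost_pmf mult.commute)

lemma mg_pmf: "pmf (map_pmf fst m) w = mg (pmf m) w"
  unfolding mg_def pmf_map by (simp add: measure_measure_pmf_finite vimage_def)

lemma sum_pmf_UNIV: "(\<Sum>p\<in>UNIV. pmf m p) = (1::real)" for m :: "'a::finite pmf"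
  by (rule sum_pmf_eq_1) auto

locale cg =
  fixes C :: "'w::finite \<Rightarrow> 'e::finite set set"
    and c :: "'e \<Rightarrow> real \<Rightarrow> real"
  assumes C_ne: "\<forall>w. C w \<noteq> {}"
    and C_sub: "\<forall>w. \<forall>x\<in>C w. x \<noteq> {}"
    and c_cont: "\<forall>e. continuous_on {0..} (c e)"
    and c_mono: "\<forall>e. mono_on {0..} (c e)"
    and c_nonneg: "\<forall>e. \<forall>t\<ge>0. c e t \<ge> 0"
    and c_pos: "\<forall>w. \<forall>x\<in>C w. \<exists>e\<in>x. \<forall>t>0. c e t > 0"
begin

definition pe :: "'w \<times> 'e set \<Rightarrow> 'e" where "pe p = (SOME e. e \<in> snd p \<and> (\<forall>t>0. 0 < c e t))"
definition "KK = real CARD('w \<times> 'e set)"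
definition "adm = {p. snd p \<in> C (fst p)}"
definition "delta = (1/KK) * Min ((\<lambda>p. c (pe p) (1/KK)) ` adm)"
definition "BB = (\<Sum>e\<in>UNIV. c e 1)"

lemma KK_pos: "KK > 0" unfolding KK_def by simp

lemma adm_ne: "adm \<noteq> {}"
proof -
  obtain x where "x \<in> C undefined" using C_ne by blast
  then have "(undefined, x) \<in> adm" unfolding adm_def by simp
  then show ?thesis by blast
qed

lemma pe: "p \<in> adm \<Longrightarrow> pe p \<in> snd p \<and> (\<forall>t>0. 0 < c (pe p) t)"
  unfolding pe_def adm_def by (rule someI_ex) (use c_pos in blast)

lemma delta_pos: "delta > 0"
proof -
  have "Min ((\<lambda>p. c (pe p) (1/KK)) ` adm) > 0"
    using adm_ne pe KK_pos by (subst Min_gr_iff) auto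
  then show ?thesis unfolding delta_def using KK_pos by simp
qed

lemma cmono: "0 \<le> s \<Longrightarrow> s \<le> t \<Longrightarrow> c e s \<le> c e t"
  using c_mono by (meson atLeast_iff mono_onD order_trans)

lemma ld_nonneg: "(\<And>p. q p \<ge> 0) \<Longrightarrow> ld q e \<ge> 0"
  unfolding ld_def by (simp add: sum_nonneg)

lemma ld_le1: "(\<And>p. q p \<ge> 0) \<Longrightarrow> sum q UNIV = 1 \<Longrightarrow> ld q e \<le> 1"
  unfolding ld_def by (metis sum_mono2 finite subset_UNIV)

lemma Fc_nonneg: assumes "\<And>p. q p \<ge> 0" shows "Fc c q w x \<ge> 0"
  unfolding Fc_def by (intro sum_nonneg) (simp add: c_nonneg ld_nonneg[OF assms])

lemma Fc_le: assumes "\<And>p. q p \<ge> 0" "sum q UNIV = 1" shows "Fc c q w x \<le> BB"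
proof -
  have "Fc c q w x \<le> (\<Sum>e\<in>x. c e 1)"
    unfolding Fc_def by (rule sum_mono) (intro cmono ld_nonneg[OF assms(1)] ld_le1[OF assms])
  also have "\<dots> \<le> BB" unfolding BB_def
    by (rule sum_mono2) (use c_nonneg in auto)
  finally show ?thesis .
qed

lemma Vc_nonneg: "(\<And>p. q p \<ge> 0) \<Longrightarrow> Vc c q \<ge> 0"
  unfolding Vc_def by (simp add: sum_nonneg Fc_nonneg)

lemma Vc_le: assumes "\<And>p. q p \<ge> 0" "sum q UNIV = 1" shows "Vc c q \<le> BB"
proof -
  have "Vc c q \<le> (\<Sum>p\<in>UNIV. q p * BB)"
    unfolding Vc_def by (rule sum_mono) (intro mult_left_mono Fc_le[OF assms] assms(1))
  also have "\<dots> = BB" using assms(2) by (simp add: sum_distrib_right[symmetric])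
  finally show ?thesis .
qed

lemma Vc_ge: assumes nn: "\<And>p. q p \<ge> 0" and s1: "sum q UNIV = 1"
  and ad: "\<And>p. q p \<noteq> 0 \<Longrightarrow> p \<in> adm"
  shows "Vc c q \<ge> delta"
proof -
  have "\<exists>p0. q p0 \<ge> 1/KK"
  proof (rule ccontr)
    assume "\<not> (\<exists>p0. q p0 \<ge> 1/KK)"
    then have lt: "\<forall>p\<in>UNIV. q p < 1/KK" by (auto simp: not_le)
    have "sum q UNIV < sum (\<lambda>_::'w \<times> 'e set. 1/KK) UNIV" apply (rule sum_strict_mono_ex1) using lt by (auto simp: less_imp_le)
    also have "\<dots> = 1" using KK_pos by (simp add: KK_def)
    finally show False using s1 by simp
  qed
  then obtain p0 where p0: "q p0 \<ge> 1/KK" by blast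
  have lnn: "\<And>e. ld q e \<ge> 0" by (rule ld_nonneg) (rule nn)
  have fnn: "\<And>w x. Fc c q w x \<ge> 0" by (rule Fc_nonneg) (rule nn)
  have qp0: "q p0 > 0" using p0 KK_pos by (smt (verit) divide_pos_pos)
  then have a0: "p0 \<in> adm" by (intro ad) simp
  let ?e = "pe p0"
  have e: "?e \<in> snd p0" "\<forall>t>0. 0 < c ?e t" using pe[OF a0] by auto
  have "ld q ?e \<ge> q p0" unfolding ld_def
    by (rule member_le_sum) (use e nn in auto)
  then have "c ?e (ld q ?e) \<ge> c ?e (1/KK)" using p0 KK_pos by (intro cmono) auto
  moreover have "Fc c q (fst p0) (snd p0) \<ge> c ?e (ld q ?e)" unfolding Fc_def
    by (rule member_le_sum) (use e c_nonneg lnn in auto)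
  moreover have "Vc c q \<ge> q p0 * Fc c q (fst p0) (snd p0)" unfolding Vc_def
    by (rule member_le_sum) (use nn fnn in auto)
  moreover have "Min ((\<lambda>p. c (pe p) (1/KK)) ` adm) \<le> c ?e (1/KK)"
    using a0 by (intro Min_le) auto
  moreover have "0 \<le> Min ((\<lambda>p. c (pe p) (1/KK)) ` adm)"
    using delta_pos KK_pos unfolding delta_def by (simp add: zero_less_divide_iff)
  ultimately have "Vc c q \<ge> (1/KK) * Min ((\<lambda>p. c (pe p) (1/KK)) ` adm)"
  proof -
    assume h: "c ?e (1/KK) \<le> c ?e (ld q ?e)" "c ?e (ld q ?e) \<le> Fc c q (fst p0) (snd p0)"
      "q p0 * Fc c q (fst p0) (snd p0) \<le> Vc c q" "Min ((\<lambda>p. c (pe p) (1/KK)) ` adm) \<le> c ?e (1/KK)"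
      "0 \<le> Min ((\<lambda>p. c (pe p) (1/KK)) ` adm)"
    have "(1/KK) * Min ((\<lambda>p. c (pe p) (1/KK)) ` adm) \<le> (1/KK) * Fc c q (fst p0) (snd p0)"
      using h KK_pos by (intro mult_left_mono) auto
    also have "\<dots> \<le> q p0 * Fc c q (fst p0) (snd p0)"
      using p0 fnn by (intro mult_right_mono) auto
    finally show ?thesis using h(3) by linarith
  qed
  then show ?thesis unfolding delta_def .
qed

end

lemma set_emp: "n > 0 \<Longrightarrow> set_pmf (emp n ws xs) = (\<lambda>i. (ws i, xs i)) ` {..<n}"
  unfolding emp_def by (simp add: lessThan_empty_iff)

lemma fst_emp: "map_pmf fst (emp n ws xs) = map_pmf ws (pmf_of_set {..<n})"
  unfolding emp_def by (simp add: pmf.map_comp o_def)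

definition cnt :: "nat \<Rightarrow> (nat \<Rightarrow> 'e set) \<Rightarrow> 'e \<Rightarrow> nat" where
  "cnt n xs e = card {j\<in>{..<n}. e \<in> xs j}"

lemma load_emp: "n > 0 \<Longrightarrow> load (emp n ws xs) e = real (cnt n xs e) / real n"
  unfolding load_def emp_def cnt_def
  by (simp add: measure_pmf_of_set lessThan_empty_iff vimage_def Int_def)

lemma cost_emp: "n > 0 \<Longrightarrow> cost c (emp n ws xs) w x = (\<Sum>e\<in>x. c e (real (cnt n xs e) / real n))"
  unfolding cost_def by (simp add: load_emp)

lemma cnt_le: "cnt n xs e \<le> n"
  unfolding cnt_def by (metis (no_types, lifting) card_lessThan card_mono finite_lessThan mem_Collect_eq subsetI)

lemma cnt_upd:
  assumes "i < n"
  shows "cnt n (xs(i:=y)) e + (if e \<in> xs i then 1 else 0) = cnt n xs e + (if e \<in> y then 1 else 0)"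
proof -
  define D where "D = {j\<in>{..<n}. j \<noteq> i \<and> e \<in> xs j}"
  have fD: "finite D" "i \<notin> D" unfolding D_def by auto
  have 1: "{j\<in>{..<n}. e \<in> (xs(i:=y)) j} = (if e \<in> y then insert i D else D)"
    using assms unfolding D_def by auto
  have 2: "{j\<in>{..<n}. e \<in> xs j} = (if e \<in> xs i then insert i D else D)"
    using assms unfolding D_def by auto
  show ?thesis unfolding cnt_def 1 2 using fD by auto
qed

lemma emp_restrict: "n > 0 \<Longrightarrow> emp n ws (restrict xs {..<n}) = emp n ws xs"
  unfolding emp_def by (intro map_pmf_cong) (auto simp: lessThan_empty_iff)

lemma finite_emps:
  fixes ws :: "nat \<Rightarrow> 'w" and P :: "(nat \<Rightarrow> 'e::finite set) \<Rightarrow> bool"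
  assumes n: "n > 0"
  shows "finite {emp n ws xs | xs. P xs}"
proof -
  have "{emp n ws xs | xs. P xs} \<subseteq> (\<lambda>xs. emp n ws xs) ` (Pi\<^sub>E {..<n} (\<lambda>_. UNIV::'e::finite set set))"
  proof
    fix m assume "m \<in> {emp n ws xs | xs. P xs}"
    then obtain xs where "m = emp n ws xs" by blast
    then have "m = emp n ws (restrict xs {..<n})" using n by (simp add: emp_restrict)
    then show "m \<in> (\<lambda>xs. emp n ws xs) ` (Pi\<^sub>E {..<n} (\<lambda>_. UNIV))" by auto
  qed
  moreover have "finite (Pi\<^sub>E {..<n} (\<lambda>_. UNIV::'e::finite set set))" by (intro finite_PiE) auto
  ultimately show ?thesis by (meson finite_imageI finite_subset)
qed

context cg begin

definition Pot :: "nat \<Rightarrow> (nat \<Rightarrow> 'e set) \<Rightarrow> real" where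
  "Pot n xs = (\<Sum>e\<in>UNIV. \<Sum>k<cnt n xs e. c e (real (Suc k) / real n))"

lemma Pot_edge:
  fixes a a' :: nat and f :: "nat \<Rightarrow> real"
  assumes rel: "a' + (if b1 then 1 else 0) = a + (if b2 then 1 else 0)"
  shows "(\<Sum>k<a'. f (Suc k)) - (\<Sum>k<a. f (Suc k)) = (if b2 then f a' else 0) - (if b1 then f a else 0)"
proof (cases b1; cases b2)
  assume "b1" "\<not> b2"
  then have "a = Suc a'" using rel by simp
  then show ?thesis using \<open>b1\<close> \<open>\<not> b2\<close> by simp
next
  assume "\<not> b1" "b2"
  then have "a' = Suc a" using rel by simp
  then show ?thesis using \<open>\<not> b1\<close> \<open>b2\<close> by simp
qed (use rel in auto)

lemma Pot_diff:
  assumes "i < n" "n > 0"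
  shows "Pot n (xs(i:=y)) - Pot n xs
     = cost c (emp n ws (xs(i:=y))) w y - cost c (emp n ws xs) w' (xs i)"
proof -
  have E: "(\<Sum>k<cnt n (xs(i:=y)) e. c e (real (Suc k) / real n)) - (\<Sum>k<cnt n xs e. c e (real (Suc k) / real n))
     = (if e \<in> y then c e (real (cnt n (xs(i:=y)) e) / real n) else 0)
        - (if e \<in> xs i then c e (real (cnt n xs e) / real n) else 0)" for e
    by (rule Pot_edge[where f="\<lambda>k. c e (real k / real n)", OF cnt_upd[OF assms(1)]])
  have "Pot n (xs(i:=y)) - Pot n xs =
     (\<Sum>e\<in>UNIV. (\<Sum>k<cnt n (xs(i:=y)) e. c e (real (Suc k) / real n)) - (\<Sum>k<cnt n xs e. c e (real (Suc k) / real n)))"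
    unfolding Pot_def by (simp add: sum_subtractf)
  also have "\<dots> = (\<Sum>e\<in>UNIV. (if e \<in> y then c e (real (cnt n (xs(i:=y)) e) / real n) else 0)
        - (if e \<in> xs i then c e (real (cnt n xs e) / real n) else 0))"
    by (intro sum.cong refl E)
  also have "\<dots> = (\<Sum>e\<in>y. c e (real (cnt n (xs(i:=y)) e) / real n)) - (\<Sum>e\<in>xs i. c e (real (cnt n xs e) / real n))"
    by (simp add: sum_subtractf sum.inter_restrict[symmetric])
  finally show ?thesis using assms by (simp add: cost_emp)
qed

lemma nash_exists:
  assumes "n > 0"
  shows "\<exists>xs. is_nash C c n ws xs"
proof -
  define P where "P = Pi\<^sub>E {..<n} (\<lambda>i. C (ws i))"
  have fP: "finite P" unfolding P_def by (intro finite_PiE) auto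
  have neP: "P \<noteq> {}" unfolding P_def using C_ne by (simp add: PiE_eq_empty_iff)
  have "Min (Pot n ` P) \<in> Pot n ` P" using fP neP by (intro Min_in) auto
  then obtain xs where xsP: "xs \<in> P" and xsmin: "Pot n xs = Min (Pot n ` P)"
    by (metis imageE)
  have opt: "Pot n xs \<le> Pot n xs'" if "xs' \<in> P" for xs'
    unfolding xsmin using fP that by (intro Min_le) auto
  have adm: "\<forall>i<n. xs i \<in> C (ws i)" using xsP unfolding P_def by auto
  have "cost c (emp n ws xs) (ws i) (xs i) = (MIN y\<in>C (ws i). cost c (emp n ws (xs(i := y))) (ws i) y)"
    if i: "i < n" for i
  proof (rule antisym)
    have fin: "finite (C (ws i))" by simp
    show "cost c (emp n ws xs) (ws i) (xs i) \<le> (MIN y\<in>C (ws i). cost c (emp n ws (xs(i := y))) (ws i) y)"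
    proof (rule Min.boundedI)
      show "finite ((\<lambda>y. cost c (emp n ws (xs(i := y))) (ws i) y) ` C (ws i))" by simp
      show "(\<lambda>y. cost c (emp n ws (xs(i := y))) (ws i) y) ` C (ws i) \<noteq> {}" using C_ne by auto
      fix a assume "a \<in> (\<lambda>y. cost c (emp n ws (xs(i := y))) (ws i) y) ` C (ws i)"
      then obtain y where y: "y \<in> C (ws i)" "a = cost c (emp n ws (xs(i := y))) (ws i) y" by auto
      have "xs(i:=y) \<in> P" using xsP y i unfolding P_def
        by (metis PiE_fun_upd insert_absorb lessThan_iff)
      then have "Pot n xs \<le> Pot n (xs(i:=y))" by (rule opt)
      then show "cost c (emp n ws xs) (ws i) (xs i) \<le> a"
        using Pot_diff[OF i assms, of xs y ws "ws i" "ws i"] y by simp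
    qed
    have "(MIN y\<in>C (ws i). cost c (emp n ws (xs(i := y))) (ws i) y) \<le> cost c (emp n ws (xs(i := xs i))) (ws i) (xs i)"
      using adm i by (intro Min_le) (auto intro!: image_eqI[where x="xs i"])
    then show "(MIN y\<in>C (ws i). cost c (emp n ws (xs(i := y))) (ws i) y) \<le> cost c (emp n ws xs) (ws i) (xs i)"
      by simp
  qed
  then show ?thesis using adm unfolding is_nash_def by blast
qed

end

context cg begin

lemma nash_approx:
  assumes eta: "\<eta> > 0"
  shows "\<exists>N>0. \<forall>n\<ge>N. \<forall>ws xs. is_nash C c n ws xs \<longrightarrow>
     (\<forall>i<n. \<forall>y\<in>C (ws i). cost c (emp n ws xs) (ws i) (xs i) \<le> cost c (emp n ws xs) (ws i) y + \<eta>)"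
proof -
  define E where "E = real CARD('e)"
  have E: "E > 0" unfolding E_def by simp
  define \<eta>' where "\<eta>' = \<eta> / E"
  have eta': "\<eta>' > 0" unfolding \<eta>'_def using eta E by simp
  have "\<forall>e. \<exists>d>0. \<forall>s\<in>{0..1}. \<forall>t\<in>{0..1}. dist t s < d \<longrightarrow> dist (c e t) (c e s) < \<eta>'"
  proof
    fix e
    have "continuous_on {0..1} (c e)" using c_cont continuous_on_subset[of "{0..}" "c e" "{0..1}"] by auto
    then have "uniformly_continuous_on {0..1::real} (c e)"
      by (intro compact_uniformly_continuous) auto
    then show "\<exists>d>0. \<forall>s\<in>{0..1}. \<forall>t\<in>{0..1}. dist t s < d \<longrightarrow> dist (c e t) (c e s) < \<eta>'"
      unfolding uniformly_continuous_on_def using eta' by blast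
  qed
  then obtain d where d: "\<And>e. d e > 0"
    "\<And>e s t. s \<in> {0..1} \<Longrightarrow> t \<in> {0..1} \<Longrightarrow> dist t s < d e \<Longrightarrow> dist (c e t) (c e s) < \<eta>'"
    by metis
  define D where "D = Min (range d)"
  have D: "D > 0" unfolding D_def using d(1) by (subst Min_gr_iff) auto
  have Dle: "D \<le> d e" for e unfolding D_def by (intro Min_le) auto
  obtain N :: nat where N: "N > 0" "inverse (real N) < D" using ex_inverse_of_nat_less[OF D] by blast
  show ?thesis
  proof (intro exI[of _ N] conjI allI impI ballI N(1))
    fix n ws xs i y
    assume n: "N \<le> n" and nash: "is_nash C c n ws xs" and i: "i < n" and y: "y \<in> C (ws i)"
    have n0: "n > 0" using n N by simp
    have inv: "1 / real n < D"
      using N n by (smt (verit, ccfv_SIG) inverse_eq_divide le_imp_inverse_le of_nat_0_less_iff of_nat_mono)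
    define xs' where "xs' = xs(i:=y)"
    have "cost c (emp n ws xs) (ws i) (xs i) = (MIN y\<in>C (ws i). cost c (emp n ws (xs(i := y))) (ws i) y)"
      using nash i unfolding is_nash_def by blast
    also have "\<dots> \<le> cost c (emp n ws xs') (ws i) y" unfolding xs'_def using y by (intro Min_le) auto
    also have "\<dots> = (\<Sum>e\<in>y. c e (real (cnt n xs' e) / real n))" using n0 by (simp add: cost_emp)
    also have "\<dots> \<le> (\<Sum>e\<in>y. c e (real (cnt n xs e) / real n) + \<eta>')"
    proof (rule sum_mono)
      fix e
      have rel: "cnt n xs' e + (if e \<in> xs i then 1 else 0) = cnt n xs e + (if e \<in> y then 1 else 0)"
        unfolding xs'_def by (rule cnt_upd[OF i])
      have ab: "\<bar>real (cnt n xs' e) - real (cnt n xs e)\<bar> \<le> 1"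
        using rel by (auto split: if_splits)
      have "\<bar>real (cnt n xs' e) / real n - real (cnt n xs e) / real n\<bar> = \<bar>real (cnt n xs' e) - real (cnt n xs e)\<bar> / real n"
        using n0 by (simp add: diff_divide_distrib[symmetric] abs_divide)
      also have "\<dots> \<le> 1 / real n" using ab n0 by (simp add: divide_right_mono)
      finally have "dist (real (cnt n xs' e) / real n) (real (cnt n xs e) / real n) < d e"
        using inv Dle[of e] by (simp add: dist_real_def)
      moreover have "real (cnt n xs' e) / real n \<in> {0..1}" "real (cnt n xs e) / real n \<in> {0..1}"
        using cnt_le[of n xs' e] cnt_le[of n xs e] n0 by auto
      ultimately have "dist (c e (real (cnt n xs' e) / real n)) (c e (real (cnt n xs e) / real n)) < \<eta>'"
        using d(2) by blast
      then show "c e (real (cnt n xs' e) / real n) \<le> c e (real (cnt n xs e) / real n) + \<eta>'"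
        by (simp add: dist_real_def)
    qed
    also have "\<dots> = cost c (emp n ws xs) (ws i) y + real (card y) * \<eta>'"
      using n0 by (simp add: cost_emp sum.distrib)
    also have "\<dots> \<le> cost c (emp n ws xs) (ws i) y + \<eta>"
    proof -
      have "real (card y) \<le> E" unfolding E_def by (simp add: card_mono)
      then have "real (card y) * \<eta>' \<le> E * \<eta>'" using eta' by (intro mult_right_mono) auto
      also have "\<dots> = \<eta>" unfolding \<eta>'_def using E by simp
      finally show ?thesis by simp
    qed
    finally show "cost c (emp n ws xs) (ws i) (xs i) \<le> cost c (emp n ws xs) (ws i) y + \<eta>" .
  qed
qed

end

context cg begin

lemma adm_pmf: "m \<in> admissible C lam \<Longrightarrow> p \<in> set_pmf m \<Longrightarrow> p \<in> adm"
proof -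
  assume m: "m \<in> admissible C lam" and p: "p \<in> set_pmf m"
  then have "measure_pmf.prob m {p. snd p \<in> C (fst p)} = 1" unfolding admissible_def by simp
  then have "AE x in measure_pmf m. x \<in> {p. snd p \<in> C (fst p)}" by (rule measure_pmf.AE_prob_1)
  then have "\<forall>y\<in>set_pmf m. y \<in> {p. snd p \<in> C (fst p)}" by (simp add: AE_measure_pmf_iff)
  then show "p \<in> adm" using p unfolding adm_def by blast
qed

lemma sc_nonneg: "social_cost c (m :: ('w \<times> 'e set) pmf) \<ge> 0"
  unfolding sc_pmf by (rule Vc_nonneg) simp

lemma sc_le: "social_cost c (m :: ('w \<times> 'e set) pmf) \<le> BB"
  unfolding sc_pmf by (rule Vc_le) (auto simp: sum_pmf_UNIV)

lemma sc_ge: "m \<in> admissible C lam \<Longrightarrow> social_cost c m \<ge> delta"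
  unfolding sc_pmf by (rule Vc_ge) (auto simp: sum_pmf_UNIV adm_pmf set_pmf_iff)

lemma admissible_ne: "admissible C lam \<noteq> {}"
proof -
  define f where "f w = (SOME x. x \<in> C w)" for w
  have f: "f w \<in> C w" for w unfolding f_def using C_ne by (simp add: some_in_eq)
  define m0 where "m0 = map_pmf (\<lambda>w. (w, f w)) lam"
  have "map_pmf fst m0 = lam" unfolding m0_def by (simp add: pmf.map_comp o_def)
  moreover have "measure_pmf.prob m0 {p. snd p \<in> C (fst p)} = 1"
    by (subst measure_pmf.prob_eq_1) (auto simp: AE_measure_pmf_iff m0_def f)
  ultimately have "m0 \<in> admissible C lam" unfolding admissible_def by simp
  then show ?thesis by blast
qed

lemma Inf_adm: "delta \<le> Inf (social_cost c ` admissible C lam)"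
  using admissible_ne sc_ge by (intro cInf_greatest) auto

lemma Inf_adm_le: "m \<in> admissible C lam \<Longrightarrow> Inf (social_cost c ` admissible C lam) \<le> social_cost c m"
proof (rule cInf_lower)
  show "bdd_below (social_cost c ` admissible C lam)"
    by (rule bdd_belowI[where m=0]) (auto simp: sc_nonneg)
qed auto

definition "UU = max BB \<bar>Sup ({}::real set)\<bar> / delta"

lemma PoA_le: "PoA C c lam \<le> UU"
proof -
  define S where "S = Sup (social_cost c ` mf_equilibria C c lam)"
  define I where "I = Inf (social_cost c ` admissible C lam)"
  have I: "I \<ge> delta" unfolding I_def by (rule Inf_adm)
  have S: "S \<le> max BB \<bar>Sup ({}::real set)\<bar>"
  proof (cases "mf_equilibria C c lam = {}")
    case True then show ?thesis unfolding S_def by simp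
  next
    case False
    then have "S \<le> BB" unfolding S_def by (intro cSup_least) (auto simp: sc_le)
    then show ?thesis by simp
  qed
  show ?thesis
  proof (cases "S \<ge> 0")
    case True
    have "S / I \<le> S / delta" using True I delta_pos by (intro divide_left_mono) auto
    also have "\<dots> \<le> UU" unfolding UU_def using S delta_pos by (intro divide_right_mono) auto
    finally show ?thesis unfolding PoA_def S_def I_def .
  next
    case False
    then have "S / I \<le> 0" using I delta_pos by (simp add: divide_nonpos_pos)
    also have "0 \<le> UU" unfolding UU_def using delta_pos by simp
    finally show ?thesis unfolding PoA_def S_def I_def .
  qed
qed

lemma bdd_R: "bdd_above {PoA C c lam | lam. P lam}"
  using PoA_le by (intro bdd_aboveI[where M=UU]) auto

lemma limit_nonneg: "(\<And>p. (\<lambda>k. Q k p) \<longlonglongrightarrow> q p) \<Longrightarrow> (\<And>k p. Q k p \<ge> (0::real)) \<Longrightarrow> q p \<ge> 0"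
  by (rule LIMSEQ_le_const[where X="\<lambda>k. Q k p"]) auto

lemma ld_tendsto: fixes Q :: "nat \<Rightarrow> 'w \<times> 'e set \<Rightarrow> real" assumes "\<And>p. (\<lambda>k. Q k p) \<longlonglongrightarrow> q p" shows "(\<lambda>k. ld (Q k) e) \<longlonglongrightarrow> ld q e"
  unfolding ld_def by (rule tendsto_sum) (rule assms)

lemma Fc_tendsto:
  fixes Q :: "nat \<Rightarrow> 'w \<times> 'e set \<Rightarrow> real"
  assumes Q: "\<And>p. (\<lambda>k. Q k p) \<longlonglongrightarrow> q p" and nn: "\<And>k p. Q k p \<ge> 0"
  shows "(\<lambda>k. Fc c (Q k) w x) \<longlonglongrightarrow> Fc c q w x"
  unfolding Fc_def
proof (rule tendsto_sum)
  fix e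
  have qn: "\<And>p. q p \<ge> 0" by (rule limit_nonneg[OF Q nn])
  have l: "ld q e \<in> {0..}" using ld_nonneg[of q e] qn by simp
  have ev: "\<forall>\<^sub>F k in sequentially. ld (Q k) e \<in> {0..}"
  proof (intro always_eventually allI)
    fix k show "ld (Q k) e \<in> {0..}" using ld_nonneg[of "Q k" e] nn by simp
  qed
  have cc: "continuous_on {0..} (c e)" using c_cont by blast
  show "(\<lambda>k. c e (ld (Q k) e)) \<longlonglongrightarrow> c e (ld q e)"
    by (rule continuous_on_tendsto_compose[OF cc ld_tendsto[OF Q] l ev])
qed

lemma Vc_tendsto:
  fixes Q :: "nat \<Rightarrow> 'w \<times> 'e set \<Rightarrow> real"
  assumes Q: "\<And>p. (\<lambda>k. Q k p) \<longlonglongrightarrow> q p" and nn: "\<And>k p. Q k p \<ge> 0"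
  shows "(\<lambda>k. Vc c (Q k)) \<longlonglongrightarrow> Vc c q"
  unfolding Vc_def
proof (intro tendsto_sum tendsto_mult)
  fix p :: "'w \<times> 'e set"
  show "(\<lambda>k. Q k p) \<longlonglongrightarrow> q p" by (rule Q)
  show "(\<lambda>k. Fc c (Q k) (fst p) (snd p)) \<longlonglongrightarrow> Fc c q (fst p) (snd p)" by (rule Fc_tendsto[OF Q nn])
qed

end

lemma embed_pmf_fin:
  fixes q :: "'a::finite \<Rightarrow> real"
  assumes nn: "\<And>p. q p \<ge> 0" and s: "sum q UNIV = 1"
  shows "pmf (embed_pmf q) = q"
proof
  fix x
  have "(\<integral>\<^sup>+ x. ennreal (q x) \<partial>count_space UNIV) = (\<Sum>x\<in>UNIV. ennreal (q x))"
    by (rule nn_integral_count_space_finite) simp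
  also have "\<dots> = ennreal (sum q UNIV)" using nn by simp
  also have "\<dots> = 1" using s by simp
  finally show "pmf (embed_pmf q) x = q x" by (rule pmf_embed_pmf[OF nn])
qed

lemma seq_unique_const: "(\<lambda>k. a) \<longlonglongrightarrow> (b::real) \<Longrightarrow> b = a"
  using LIMSEQ_unique tendsto_const by blast

context cg begin

lemma prob_adm_1:
  assumes "\<And>p. p \<in> set_pmf m \<Longrightarrow> p \<in> adm"
  shows "measure_pmf.prob m {p. snd p \<in> C (fst p)} = 1"
  by (subst measure_pmf.prob_eq_1) (use assms in \<open>auto simp: AE_measure_pmf_iff adm_def\<close>)

lemma limit_props:
  fixes Q Q' :: "nat \<Rightarrow> 'w \<times> 'e set \<Rightarrow> real" and q q' :: "'w \<times> 'e set \<Rightarrow> real" and S0 :: "'w set"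
  assumes Q: "\<And>p. (\<lambda>k. Q k p) \<longlonglongrightarrow> q p" and Q': "\<And>p. (\<lambda>k. Q' k p) \<longlonglongrightarrow> q' p"
    and nn: "\<And>k p. Q k p \<ge> 0" and nn': "\<And>k p. Q' k p \<ge> 0"
    and s1: "\<And>k. sum (Q k) UNIV = 1" and s1': "\<And>k. sum (Q' k) UNIV = 1"
    and mgeq: "\<And>k w. mg (Q k) w = mg (Q' k) w"
    and supp: "\<And>k w. w \<notin> S0 \<Longrightarrow> mg (Q k) w = 0"
    and ad': "\<And>k p. Q' k p \<noteq> 0 \<Longrightarrow> p \<in> adm"
    and eqm: "\<And>k p y. Q k p \<noteq> 0 \<Longrightarrow> p \<in> adm \<and> (y \<in> C (fst p) \<longrightarrow>
                 Fc c (Q k) (fst p) (snd p) \<le> Fc c (Q k) (fst p) y + \<eta> k)"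
    and eta: "\<eta> \<longlonglongrightarrow> 0"
    and ratio: "\<And>k. Vc c (Q k) / Vc c (Q' k) \<ge> Rr"
  shows "\<exists>lam. set_pmf lam \<subseteq> S0 \<and> PoA C c lam \<ge> Rr"
proof -
  have qn: "\<And>p. q p \<ge> 0" by (rule limit_nonneg[OF Q nn])
  have qn': "\<And>p. q' p \<ge> 0" by (rule limit_nonneg[OF Q' nn'])
  have "(\<lambda>k. sum (Q k) UNIV) \<longlonglongrightarrow> sum q UNIV" by (rule tendsto_sum) (rule Q)
  then have "(\<lambda>k. 1::real) \<longlonglongrightarrow> sum q UNIV" by (simp add: s1)
  then have qs: "sum q UNIV = 1" by (rule seq_unique_const)
  have "(\<lambda>k. sum (Q' k) UNIV) \<longlonglongrightarrow> sum q' UNIV" by (rule tendsto_sum) (rule Q')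
  then have "(\<lambda>k. 1::real) \<longlonglongrightarrow> sum q' UNIV" by (simp add: s1')
  then have qs': "sum q' UNIV = 1" by (rule seq_unique_const)
  have mgl: "(\<lambda>k. mg (Q k) w) \<longlonglongrightarrow> mg q w" for w unfolding mg_def by (rule tendsto_sum) (rule Q)
  have mgl': "(\<lambda>k. mg (Q' k) w) \<longlonglongrightarrow> mg q' w" for w unfolding mg_def by (rule tendsto_sum) (rule Q')
  have mgq: "mg q w = mg q' w" for w
  proof -
    have "(\<lambda>k. mg (Q' k) w) \<longlonglongrightarrow> mg q w" using mgl[of w] by (simp add: mgeq)
    then show ?thesis using mgl'[of w] by (rule LIMSEQ_unique)
  qed
  have suppq: "mg q w = 0" if ws0: "w \<notin> S0" for w
  proof -
    have "(\<lambda>k. 0::real) \<longlonglongrightarrow> mg q w" using mgl[of w] by (simp add: supp[OF ws0])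
    then show ?thesis by (rule seq_unique_const)
  qed
  have evne: "\<forall>\<^sub>F k in sequentially. Q k p \<noteq> 0" if "q p \<noteq> 0" for p
    using tendsto_imp_eventually_ne[OF Q that] .
  have evne': "\<forall>\<^sub>F k in sequentially. Q' k p \<noteq> 0" if "q' p \<noteq> 0" for p
    using tendsto_imp_eventually_ne[OF Q' that] .
  have adq: "p \<in> adm" if qp0: "q p \<noteq> 0" for p
  proof -
    obtain N where "\<forall>n\<ge>N. Q n p \<noteq> 0" using evne[OF qp0] unfolding eventually_sequentially by blast
    then have "Q N p \<noteq> 0" by simp
    then show ?thesis using eqm by blast
  qed
  have adq': "p \<in> adm" if qp0: "q' p \<noteq> 0" for p
  proof -
    obtain N where "\<forall>n\<ge>N. Q' n p \<noteq> 0" using evne'[OF qp0] unfolding eventually_sequentially by blast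
    then have "Q' N p \<noteq> 0" by simp
    then show ?thesis using ad' by blast
  qed
  have eqq: "Fc c q (fst p) (snd p) \<le> Fc c q (fst p) y" if "q p \<noteq> 0" "y \<in> C (fst p)" for p y
  proof -
  have "Fc c q (fst p) (snd p) \<le> Fc c q (fst p) y + 0"
  proof (rule tendsto_le[OF sequentially_bot])
    show "(\<lambda>k. Fc c (Q k) (fst p) y + \<eta> k) \<longlonglongrightarrow> Fc c q (fst p) y + 0"
      by (intro tendsto_add Fc_tendsto[OF Q nn] eta)
    show "(\<lambda>k. Fc c (Q k) (fst p) (snd p)) \<longlonglongrightarrow> Fc c q (fst p) (snd p)"
      by (rule Fc_tendsto[OF Q nn])
    show "\<forall>\<^sub>F k in sequentially. Fc c (Q k) (fst p) (snd p) \<le> Fc c (Q k) (fst p) y + \<eta> k"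
      using evne[OF that(1)] by (rule eventually_mono) (use eqm that(2) in blast)
  qed
  then show ?thesis by simp
  qed
  have Vq': "Vc c q' \<ge> delta" by (rule Vc_ge[OF qn' qs' adq'])
  have Vpos: "Vc c q' > 0" using Vq' delta_pos by simp
  have "(\<lambda>k. Vc c (Q k) / Vc c (Q' k)) \<longlonglongrightarrow> Vc c q / Vc c q'"
    by (intro tendsto_divide Vc_tendsto[OF Q nn] Vc_tendsto[OF Q' nn']) (use Vpos in simp)
  then have Rr: "Rr \<le> Vc c q / Vc c q'"
    by (rule LIMSEQ_le_const) (use ratio in blast)
  define m where "m = embed_pmf q"
  define m' where "m' = embed_pmf q'"
  define lam where "lam = map_pmf fst m"
  have pm: "pmf m = q" unfolding m_def by (rule embed_pmf_fin[OF qn qs])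
  have pm': "pmf m' = q'" unfolding m'_def by (rule embed_pmf_fin[OF qn' qs'])
  have slam: "set_pmf lam \<subseteq> S0"
  proof
    fix w assume "w \<in> set_pmf lam"
    then have "pmf lam w \<noteq> 0" by (metis set_pmf_iff)
    then have "mg q w \<noteq> 0" unfolding lam_def by (simp add: mg_pmf pm)
    then show "w \<in> S0" using suppq by blast
  qed
  have m'adm: "m' \<in> admissible C lam"
  proof -
    have "map_pmf fst m' = lam" unfolding lam_def
      by (rule pmf_eqI) (simp add: mg_pmf pm pm' mgq)
    moreover have "measure_pmf.prob m' {p. snd p \<in> C (fst p)} = 1"
      by (rule prob_adm_1) (use adq' in \<open>auto simp: set_pmf_iff pm'\<close>)
    ultimately show ?thesis unfolding admissible_def by simp
  qed
  have madm: "m \<in> admissible C lam"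
  proof -
    have "measure_pmf.prob m {p. snd p \<in> C (fst p)} = 1"
      by (rule prob_adm_1) (use adq in \<open>auto simp: set_pmf_iff pm\<close>)
    then show ?thesis unfolding admissible_def lam_def by simp
  qed
  have mmfe: "m \<in> mf_equilibria C c lam"
    unfolding mf_equilibria_def
  proof (intro CollectI conjI madm)
    show "AE p in measure_pmf m. cost c m (fst p) (snd p) = (MIN y\<in>C (fst p). cost c m (fst p) y)"
      unfolding AE_measure_pmf_iff
    proof
      fix p assume "p \<in> set_pmf m"
      then have qp: "q p \<noteq> 0" by (simp add: set_pmf_iff pm)
      have pa: "snd p \<in> C (fst p)" using adq[OF qp] unfolding adm_def by simp
      show "cost c m (fst p) (snd p) = (MIN y\<in>C (fst p). cost c m (fst p) y)"
        unfolding cost_pmf pm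
      proof (rule antisym)
        show "Fc c q (fst p) (snd p) \<le> (MIN y\<in>C (fst p). Fc c q (fst p) y)"
          using C_ne eqq[OF qp] by (intro Min.boundedI) auto
        show "(MIN y\<in>C (fst p). Fc c q (fst p) y) \<le> Fc c q (fst p) (snd p)"
          using pa by (intro Min_le) auto
      qed
    qed
  qed
  define S where "S = Sup (social_cost c ` mf_equilibria C c lam)"
  define I where "I = Inf (social_cost c ` admissible C lam)"
  have S: "Vc c q \<le> S" unfolding S_def
  proof -
    have "social_cost c m \<le> Sup (social_cost c ` mf_equilibria C c lam)"
      using mmfe by (intro cSup_upper) (auto intro: bdd_aboveI[where M=BB] sc_le)
    then show "Vc c q \<le> Sup (social_cost c ` mf_equilibria C c lam)" by (simp add: sc_pmf pm)
  qed
  have I1: "delta \<le> I" unfolding I_def by (rule Inf_adm)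
  have I2: "I \<le> Vc c q'" unfolding I_def using Inf_adm_le[OF m'adm] by (simp add: sc_pmf pm')
  have Vq: "Vc c q \<ge> 0" by (rule Vc_nonneg) (rule qn)
  have "Vc c q / Vc c q' \<le> Vc c q / I" using I1 I2 delta_pos Vq by (intro divide_left_mono) auto
  also have "\<dots> \<le> S / I" using S I1 delta_pos by (intro divide_right_mono) auto
  finally have "Rr \<le> PoA C c lam" using Rr unfolding PoA_def S_def I_def by simp
  then show ?thesis using slam by blast
qed

end

context cg begin

lemma det:
  fixes S0 :: "'w set"
  assumes eps: "\<epsilon> > 0"
  shows "\<exists>N. \<forall>n\<ge>N. \<forall>ws. (\<forall>i<n. ws i \<in> S0) \<longrightarrow>
           PoA_n C c n ws < Sup {PoA C c lam | lam. set_pmf lam \<subseteq> S0} + \<epsilon>"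
proof (rule ccontr)
  define R where "R = Sup {PoA C c lam | lam. set_pmf lam \<subseteq> S0}"
  assume "\<not> (\<exists>N. \<forall>n\<ge>N. \<forall>ws. (\<forall>i<n. ws i \<in> S0) \<longrightarrow>
           PoA_n C c n ws < Sup {PoA C c lam | lam. set_pmf lam \<subseteq> S0} + \<epsilon>)"
  then have H: "\<forall>N. \<exists>n\<ge>N. \<exists>ws. (\<forall>i<n. ws i \<in> S0) \<and> R + \<epsilon> \<le> PoA_n C c n ws"
    unfolding R_def by (auto simp: not_less)
  define \<eta> where "\<eta> k = inverse (real (Suc k))" for k
  have etapos: "\<eta> k > 0" for k unfolding \<eta>_def by simp
  have "\<forall>k. \<exists>N>0. \<forall>n\<ge>N. \<forall>ws xs. is_nash C c n ws xs \<longrightarrow>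
     (\<forall>i<n. \<forall>y\<in>C (ws i). cost c (emp n ws xs) (ws i) (xs i) \<le> cost c (emp n ws xs) (ws i) y + \<eta> k)"
    using nash_approx etapos by blast
  then obtain NN where NN: "\<And>k. NN k > 0" "\<And>k n ws xs i y. n \<ge> NN k \<Longrightarrow> is_nash C c n ws xs \<Longrightarrow> i < n \<Longrightarrow>
      y \<in> C (ws i) \<Longrightarrow> cost c (emp n ws xs) (ws i) (xs i) \<le> cost c (emp n ws xs) (ws i) y + \<eta> k"
    by metis
  define P where "P k m m' \<longleftrightarrow> map_pmf fst m = map_pmf fst m' \<and> set_pmf (map_pmf fst m) \<subseteq> S0 \<and>
     (\<forall>p\<in>set_pmf m'. p \<in> adm) \<and>
     (\<forall>p\<in>set_pmf m. p \<in> adm \<and> (\<forall>y\<in>C (fst p). cost c m (fst p) (snd p) \<le> cost c m (fst p) y + \<eta> k)) \<and>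
     R + \<epsilon> \<le> social_cost c m / social_cost c m'" for k and m m' :: "('w \<times> 'e set) pmf"
  have "\<exists>mm. P k (fst mm) (snd mm)" for k
  proof -
    obtain n ws where n: "n \<ge> NN k" and wsS: "\<forall>i<n. ws i \<in> S0" and big: "R + \<epsilon> \<le> PoA_n C c n ws"
      using H by blast
    have n0: "n > 0" using n NN(1)[of k] by simp
    define NS where "NS = social_cost c ` nash_emp C c n ws"
    define AS where "AS = social_cost c ` adm_emp C n ws"
    have finN: "finite (nash_emp C c n ws)" unfolding nash_emp_def by (rule finite_emps[OF n0])
    have finA: "finite (adm_emp C n ws)" unfolding adm_emp_def by (rule finite_emps[OF n0])
    have neN: "nash_emp C c n ws \<noteq> {}" using nash_exists[OF n0, of ws] unfolding nash_emp_def by blast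
    have sub: "nash_emp C c n ws \<subseteq> adm_emp C n ws"
      unfolding nash_emp_def adm_emp_def is_nash_def by blast
    have neA: "adm_emp C n ws \<noteq> {}" using neN sub by blast
    have "Sup NS \<in> NS" unfolding NS_def using finN neN by (simp add: cSup_eq_Max)
    then obtain m where mN: "m \<in> nash_emp C c n ws" and mS: "social_cost c m = Sup NS"
      unfolding NS_def by auto
    have "Inf AS \<in> AS" unfolding AS_def using finA neA by (simp add: cInf_eq_Min)
    then obtain m' where mA: "m' \<in> adm_emp C n ws" and mI: "social_cost c m' = Inf AS"
      unfolding AS_def by auto
    obtain xs where xs: "m = emp n ws xs" "is_nash C c n ws xs" using mN unfolding nash_emp_def by blast
    obtain xs' where xs': "m' = emp n ws xs'" "\<forall>i<n. xs' i \<in> C (ws i)" using mA unfolding adm_emp_def by blast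
    have "P k m m'"
      unfolding P_def
    proof (intro conjI ballI)
      show "map_pmf fst m = map_pmf fst m'" unfolding xs xs' by (simp add: fst_emp)
      show "set_pmf (map_pmf fst m) \<subseteq> S0" using wsS n0 unfolding xs(1) fst_emp
        by (auto simp: lessThan_empty_iff)
      fix p assume "p \<in> set_pmf m'"
      then show "p \<in> adm" using xs'(2) n0 unfolding xs'(1) set_emp[OF n0] adm_def by auto
    next
      fix p assume p: "p \<in> set_pmf m"
      then obtain i where i: "i < n" "p = (ws i, xs i)" unfolding xs(1) set_emp[OF n0] by auto
      show "p \<in> adm" using xs(2) i unfolding is_nash_def adm_def by auto
      fix y assume "y \<in> C (fst p)"
      then show "cost c m (fst p) (snd p) \<le> cost c m (fst p) y + \<eta> k"
        using NN(2)[OF n xs(2) i(1)] i(2) unfolding xs(1) by simp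
    next
      show "R + \<epsilon> \<le> social_cost c m / social_cost c m'"
        using big unfolding PoA_n_def mS mI NS_def AS_def .
    qed
    then show ?thesis by (intro exI[of _ "(m, m')"]) simp
  qed
  then obtain MM where MM: "\<And>k. P k (fst (MM k)) (snd (MM k))" by metis
  define vv :: "('w \<times> 'e set) pmf \<Rightarrow> real ^ ('w \<times> 'e set)" where "vv m = (\<chi> p. pmf m p)" for m
  define K :: "(real ^ ('w \<times> 'e set)) set" where "K = cbox (vec 0) (vec 1)"
  define f where "f k = (vv (fst (MM k)), vv (snd (MM k)))" for k
  have vK: "vv m \<in> K" for m unfolding K_def vv_def mem_box_cart by (simp add: pmf_le_1)
  have fK: "f k \<in> K \<times> K" for k unfolding f_def using vK by simp
  have "compact (K \<times> K)" unfolding K_def by (intro compact_Times compact_cbox)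
  then have "seq_compact (K \<times> K)" by (simp add: compact_eq_seq_compact_metric)
  then obtain l r where r: "strict_mono r" and lim: "(f \<circ> r) \<longlonglongrightarrow> l"
    using fK unfolding seq_compact_def by blast
  define Q where "Q k p = pmf (fst (MM (r k))) p" for k p
  define Q' where "Q' k p = pmf (snd (MM (r k))) p" for k p
  have QL: "(\<lambda>k. Q k p) \<longlonglongrightarrow> fst l $ p" for p
  proof -
    have "(\<lambda>k. fst ((f \<circ> r) k) $ p) \<longlonglongrightarrow> fst l $ p" by (intro tendsto_vec_nth tendsto_fst lim)
    then show ?thesis unfolding Q_def f_def vv_def by simp
  qed
  have QL': "(\<lambda>k. Q' k p) \<longlonglongrightarrow> snd l $ p" for p
  proof -
    have "(\<lambda>k. snd ((f \<circ> r) k) $ p) \<longlonglongrightarrow> snd l $ p" by (intro tendsto_vec_nth tendsto_snd lim)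
    then show ?thesis unfolding Q'_def f_def vv_def by simp
  qed
  have PP: "P (r k) (fst (MM (r k))) (snd (MM (r k)))" for k by (rule MM)
  have "\<exists>lam. set_pmf lam \<subseteq> S0 \<and> PoA C c lam \<ge> R + \<epsilon>"
  proof (rule limit_props[OF QL QL', where \<eta>="\<eta> \<circ> r"])
    show "\<And>k p. 0 \<le> Q k p" "\<And>k p. 0 \<le> Q' k p" unfolding Q_def Q'_def by simp_all
    show "\<And>k. sum (Q k) UNIV = 1" "\<And>k. sum (Q' k) UNIV = 1"
      unfolding Q_def Q'_def by (simp_all add: sum_pmf_UNIV[unfolded fun_eq_iff] sum_pmf_UNIV)
    show "\<And>k w. mg (Q k) w = mg (Q' k) w"
      using PP unfolding Q_def Q'_def P_def by (metis mg_pmf)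
  next
    fix k w assume w: "w \<notin> S0"
    have "set_pmf (map_pmf fst (fst (MM (r k)))) \<subseteq> S0" using PP[of k] unfolding P_def by blast
    then have "pmf (map_pmf fst (fst (MM (r k)))) w = 0" using w by (metis set_pmf_iff subsetD)
    then show "mg (Q k) w = 0" unfolding Q_def by (metis mg_pmf)
  next
    fix k p assume "Q' k p \<noteq> 0"
    then have "p \<in> set_pmf (snd (MM (r k)))" unfolding Q'_def by (metis set_pmf_iff)
    then show "p \<in> adm" using PP[of k] unfolding P_def by blast
  next
    fix k p y assume "Q k p \<noteq> 0"
    then have "p \<in> set_pmf (fst (MM (r k)))" unfolding Q_def by (metis set_pmf_iff)
    then show "p \<in> adm \<and> (y \<in> C (fst p) \<longrightarrow> Fc c (Q k) (fst p) (snd p) \<le> Fc c (Q k) (fst p) y + (\<eta> \<circ> r) k)"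
      using PP[of k] unfolding P_def Q_def by (auto simp: cost_pmf[symmetric])
  next
    show "(\<eta> \<circ> r) \<longlonglongrightarrow> 0" unfolding \<eta>_def
      by (rule LIMSEQ_subseq_LIMSEQ[OF LIMSEQ_inverse_real_of_nat r])
  next
    fix k show "R + \<epsilon> \<le> Vc c (Q k) / Vc c (Q' k)"
      using PP[of k] unfolding P_def Q_def Q'_def by (simp add: sc_pmf[symmetric])
  qed
  then obtain lam where lam: "set_pmf lam \<subseteq> S0" "PoA C c lam \<ge> R + \<epsilon>" by blast
  have "PoA C c lam \<le> R" unfolding R_def using lam(1) by (intro cSup_upper bdd_R) auto
  then show False using lam(2) eps by simp
qed

end

theorem corollary2p12:
  fixes C :: "'w::finite \<Rightarrow> 'e::finite set set"
    and c :: "'e \<Rightarrow> real \<Rightarrow> real"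
    and lam0 :: "'w pmf"
    and M :: "'a measure"
    and W :: "nat \<Rightarrow> 'a \<Rightarrow> 'w"
  assumes C_ne: "\<forall>w. C w \<noteq> {}"
    and C_sub: "\<forall>w. \<forall>x\<in>C w. x \<noteq> {}"
    and c_cont: "\<forall>e. continuous_on {0..} (c e)"
    and c_mono: "\<forall>e. mono_on {0..} (c e)"
    and c_nonneg: "\<forall>e. \<forall>t\<ge>0. c e t \<ge> 0"
    and c_pos: "\<forall>w. \<forall>x\<in>C w. \<exists>e\<in>x. \<forall>t>0. c e t > 0"
    and M: "prob_space M"
    and indep: "prob_space.indep_vars M (\<lambda>_. count_space UNIV) W UNIV"
    and law: "\<forall>i. distr M (count_space UNIV) (W i) = measure_pmf lam0"
  shows "\<forall>\<epsilon>>0. \<forall>\<kappa>>0. \<exists>N. \<forall>n\<ge>N.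
           measure M {\<omega> \<in> space M.
             PoA_n C c n (\<lambda>i. W i \<omega>)
               \<ge> Sup {PoA C c lam | lam. set_pmf lam \<subseteq> set_pmf lam0} + \<epsilon>}
           \<le> exp (- \<kappa> * real n)"
proof (intro allI impI)
  interpret cg C c using C_ne C_sub c_cont c_mono c_nonneg c_pos by unfold_locales
  interpret P: prob_space M by (rule M)
  fix \<epsilon> \<kappa> :: real assume eps: "\<epsilon> > 0" and "\<kappa> > 0"
  define R where "R = Sup {PoA C c lam | lam. set_pmf lam \<subseteq> set_pmf lam0}"
  obtain N where N: "\<And>n ws. n \<ge> N \<Longrightarrow> (\<forall>i<n. ws i \<in> set_pmf lam0) \<Longrightarrow> PoA_n C c n ws < R + \<epsilon>"
    using det[OF eps, of "set_pmf lam0"] unfolding R_def by blast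
  have meas: "W i \<in> measurable M (count_space UNIV)" for i
    using indep unfolding P.indep_vars_def by blast
  define B where "B i = W i -` (- set_pmf lam0) \<inter> space M" for i
  have Bs: "B i \<in> sets M" for i unfolding B_def by (rule measurable_sets[OF meas]) simp
  have B0: "measure M (B i) = 0" for i
  proof -
    have "measure M (B i) = measure (distr M (count_space UNIV) (W i)) (- set_pmf lam0)"
      unfolding B_def by (rule measure_distr[symmetric, OF meas]) simp
    also have "\<dots> = measure_pmf.prob lam0 (- set_pmf lam0)" using law by simp
    also have "\<dots> = 0" by (simp add: measure_pmf_zero_iff)
    finally show ?thesis .
  qed
  show "\<exists>N. \<forall>n\<ge>N. measure M {\<omega> \<in> space M. PoA_n C c n (\<lambda>i. W i \<omega>)
               \<ge> Sup {PoA C c lam | lam. set_pmf lam \<subseteq> set_pmf lam0} + \<epsilon>} \<le> exp (- \<kappa> * real n)"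
  proof (intro exI[of _ N] allI impI)
    fix n assume n: "N \<le> n"
    have sub: "{\<omega> \<in> space M. PoA_n C c n (\<lambda>i. W i \<omega>) \<ge> R + \<epsilon>} \<subseteq> (\<Union>i\<in>{..<n}. B i)"
    proof
      fix \<omega> assume "\<omega> \<in> {\<omega> \<in> space M. PoA_n C c n (\<lambda>i. W i \<omega>) \<ge> R + \<epsilon>}"
      then have om: "\<omega> \<in> space M" "PoA_n C c n (\<lambda>i. W i \<omega>) \<ge> R + \<epsilon>" by auto
      have "\<not> (\<forall>i<n. W i \<omega> \<in> set_pmf lam0)" using N[OF n, of "\<lambda>i. W i \<omega>"] om(2) by force
      then show "\<omega> \<in> (\<Union>i\<in>{..<n}. B i)" using om(1) unfolding B_def by auto
    qed
    have "measure M {\<omega> \<in> space M. PoA_n C c n (\<lambda>i. W i \<omega>) \<ge> R + \<epsilon>} \<le> measure M (\<Union>i\<in>{..<n}. B i)"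
      using sub Bs by (intro P.finite_measure_mono) auto
    also have "\<dots> \<le> (\<Sum>i\<in>{..<n}. measure M (B i))"
      using Bs by (intro P.finite_measure_subadditive_finite) auto
    also have "\<dots> = 0" by (simp add: B0)
    also have "\<dots> \<le> exp (- \<kappa> * real n)" by simp
    finally show "measure M {\<omega> \<in> space M. PoA_n C c n (\<lambda>i. W i \<omega>)
               \<ge> Sup {PoA C c lam | lam. set_pmf lam \<subseteq> set_pmf lam0} + \<epsilon>} \<le> exp (- \<kappa> * real n)"
      unfolding R_def .
  qed
qed

end
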